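(* The classes PosLimSup, PosLimInf and PosLimAvg are each closed under $\max$, and the classes AsLimSup, AsLimInf and AsLimAvg are each closed under $\min$.
   Context: A probabilistic weighted automaton over a finite alphabet $\Sigma$ is a tuple $A=(Q,\rho_I,\Sigma,\delta,\gamma)$ where $Q$ is a finite set of states, $\rho_I$ is a probability distribution on $Q$, $\delta:Q\times\Sigma\to\mathcal D(Q)$ assigns to each state and letter a probability distribution on $Q$, and $\gamma:Q\times\Sigma\times Q\to\mathbb Q$ is a weight function. A run over an infinite word $w=\sigma_1\sigma_2\dots$ is a sequence $r=q_0\sigma_1q_1\sigma_2\dots$ with $\rho_I(q_0)>0$ and $\delta(q_i,\sigma_{i+1})(q_{i+1})>0$ for all $i$; its weight sequence is $\gamma(r)=v_0v_1\dots$ with $v_i=\gamma(q_i,\sigma_{i+1},q_{i+1})$. For each $w$, the probabilities of finite run prefixes induce a probability measure $\mathbb P^A$ on runs over $w$. For a value function $\mathrm{Val}$, positive semantics: $L^{>0}_A(w)=\sup\{\eta\mid \mathbb P^A(\{r:\mathrm{Val}(\gamma(r))\ge\eta\})>0\}$; almost-sure semantics: $L^{=1}_A(w)=\sup\{\eta\mid \mathbb P^A(\{r:\mathrm{Val}(\gamma(r))\ge\eta\})=1\}$. Value functions: $\mathsf{LimSup}(v)=\limsup_n v_n$, $\mathsf{LimInf}(v)=\liminf_n v_n$, $\mathsf{LimAvg}(v)=\liminf_n\frac1n\sum_{i<n}v_i$. PosX (resp. AsX) denotes the class of automata with value function $\mathsf X$ under positive (resp. almost-sure) semantics. A class $\mathcal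 C$ is closed under $\max$ (resp. $\min$) if for any $A_1,A_2\in\mathcal C$ over the same alphabet there is $A\in\mathcal C$ with $L_A(w)=\max\{L_{A_1}(w),L_{A_2}(w)\}$ (resp. $\min$) for all words $w$. *)

theory Defs
  imports "HOL-Probability.Probability"
begin

record 'a pwa =
  states :: "nat set"
  init   :: "nat pmf"
  trans  :: "nat \<Rightarrow> 'a \<Rightarrow> nat pmf"
  wt     :: "nat \<Rightarrow> 'a \<Rightarrow> nat \<Rightarrow> rat"

definition wf_pwa :: "'a pwa \<Rightarrow> bool" where
  "wf_pwa A \<longleftrightarrow> finite (states A) \<and> set_pmf (init A) \<subseteq> states A \<and>
     (\<forall>q\<in>states A. \<forall>\<sigma>. set_pmf (trans A q \<sigma>) \<subseteq> states A)"

(* Infinite words w = sigma_1 sigma_2 ... are functions nat => 'a with w i = sigma_(i+1).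
   Probability of the finite run prefix q_0 sigma_1 q_1 ... sigma_n q_n. *)
definition prefix_prob :: "'a pwa \<Rightarrow> (nat \<Rightarrow> 'a) \<Rightarrow> nat list \<Rightarrow> real" where
  "prefix_prob A w xs =
     pmf (init A) (hd xs) * (\<Prod>i<length xs - 1. pmf (trans A (xs ! i) (w i)) (xs ! Suc i))"

definition run_measure :: "'a pwa \<Rightarrow> (nat \<Rightarrow> 'a) \<Rightarrow> nat stream measure" where
  "run_measure A w = (THE M. sets M = sets (stream_space (count_space UNIV)) \<and> prob_space M \<and>
     (\<forall>xs. xs \<noteq> [] \<longrightarrow> emeasure M {r. stake (length xs) r = xs} = ennreal (prefix_prob A w xs)))"

definition weight_seq :: "'a pwa \<Rightarrow> (nat \<Rightarrow> 'a) \<Rightarrow> nat stream \<Rightarrow> nat \<Rightarrow> real" where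
  "weight_seq A w r i = real_of_rat (wt A (r !! i) (w i) (r !! Suc i))"

datatype valfun = LimSup | LimInf | LimAvg

fun Val :: "valfun \<Rightarrow> (nat \<Rightarrow> real) \<Rightarrow> ereal" where
  "Val LimSup v = limsup (\<lambda>n. ereal (v n))"
| "Val LimInf v = liminf (\<lambda>n. ereal (v n))"
| "Val LimAvg v = liminf (\<lambda>n. ereal ((\<Sum>i<n. v i) / real n))"

datatype semantics = Pos | As

fun lang :: "semantics \<Rightarrow> valfun \<Rightarrow> 'a pwa \<Rightarrow> (nat \<Rightarrow> 'a) \<Rightarrow> ereal" where
  "lang Pos V A w = Sup {ereal \<eta> | \<eta>.
      measure (run_measure A w) {r. Val V (weight_seq A w r) \<ge> ereal \<eta>} > 0}"
| "lang As V A w = Sup {ereal \<eta> | \<eta>.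
      measure (run_measure A w) {r. Val V (weight_seq A w r) \<ge> ereal \<eta>} = 1}"

definition closed_max :: "semantics \<Rightarrow> valfun \<Rightarrow> 'a itself \<Rightarrow> bool" where
  "closed_max s V (_ :: 'a itself) \<longleftrightarrow> (\<forall>A1 A2 :: 'a pwa. wf_pwa A1 \<longrightarrow> wf_pwa A2 \<longrightarrow>
     (\<exists>A :: 'a pwa. wf_pwa A \<and> (\<forall>w. lang s V A w = max (lang s V A1 w) (lang s V A2 w))))"

definition closed_min :: "semantics \<Rightarrow> valfun \<Rightarrow> 'a itself \<Rightarrow> bool" where
  "closed_min s V (_ :: 'a itself) \<longleftrightarrow> (\<forall>A1 A2 :: 'a pwa. wf_pwa A1 \<longrightarrow> wf_pwa A2 \<longrightarrow>
     (\<exists>A :: 'a pwa. wf_pwa A \<and> (\<forall>w. lang s V A w = min (lang s V A1 w) (lang s V A2 w))))"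

end

theory Submission
  imports Defs
begin

definition Gp :: "'a::finite pwa \<Rightarrow> ('a \<times> nat \<Rightarrow> nat) pmf" where
  "Gp A = Pi_pmf (UNIV \<times> states A) 0 (\<lambda>(a,q). trans A q a)"

definition Pp :: "'a::finite pwa \<Rightarrow> (nat \<times> ('a \<times> nat \<Rightarrow> nat)) pmf" where
  "Pp A = pair_pmf (init A) (Gp A)"

primrec runf :: "(nat \<Rightarrow> 'a) \<Rightarrow> (nat \<times> ('a \<times> nat \<Rightarrow> nat)) stream \<Rightarrow> nat \<Rightarrow> nat" where
  "runf w s 0 = fst (s !! 0)"
| "runf w s (Suc n) = snd (s !! Suc n) (w n, runf w s n)"

lemma runf_meas: "(\<lambda>s. runf w s n) \<in> measurable (stream_space (measure_pmf P)) (count_space UNIV)"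
proof (induction n)
  case 0
  show ?case by simp (rule measurable_compose[OF measurable_shd], simp)
next
  case (Suc n)
  have "(\<lambda>s. (\<lambda>q s. snd (s !! Suc n) (w n, q)) (runf w s n) s) \<in> measurable (stream_space (measure_pmf P)) (count_space UNIV)"
  proof (rule measurable_compose_countable'[OF _ Suc])
    fix i
    show "(\<lambda>s. snd (s !! Suc n) (w n, i)) \<in> measurable (stream_space (measure_pmf P)) (count_space UNIV)"
      using measurable_compose[OF measurable_snth[of "Suc n" "measure_pmf P"], of "\<lambda>p. snd p (w n, i)" "count_space UNIV"]
      by simp
  qed simp
  then show ?case by simp
qed

lemma iid_sets:
  fixes P :: "'b pmf"
  shows "{s\<in>space (stream_space (measure_pmf P)). \<forall>i<n. s !! i \<in> B i} \<in> sets (stream_space (measure_pmf P))"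
proof (induction n)
  case 0
  show ?case by simp
next
  case (Suc n)
  have m: "{s\<in>space (stream_space (measure_pmf P)). s !! n \<in> B n} \<in> sets (stream_space (measure_pmf P))"
    by (rule measurable_sets_Collect[OF measurable_snth]) simp
  have "{s\<in>space (stream_space (measure_pmf P)). \<forall>i<Suc n. s !! i \<in> B i} =
    {s\<in>space (stream_space (measure_pmf P)). \<forall>i<n. s !! i \<in> B i} \<inter> {s\<in>space (stream_space (measure_pmf P)). s !! n \<in> B n}"
    unfolding All_less_Suc by blast
  then show ?case using Suc m by (simp only: sets.Int)
qed

lemma iid_prod:
  fixes P :: "'b pmf"
  shows "emeasure (stream_space (measure_pmf P)) {s. \<forall>i<n. s !! i \<in> B i} = (\<Prod>i<n. emeasure (measure_pmf P) (B i))"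
proof (induction n arbitrary: B)
  case 0
  interpret S: prob_space "stream_space (measure_pmf P)"
    by (rule prob_space.prob_space_stream_space) (rule prob_space_measure_pmf)
  show ?case using S.emeasure_space_1 by (simp add: space_stream_space)
next
  case (Suc n)
  have eq: "\<And>t. {x \<in> space (stream_space (measure_pmf P)). \<forall>i<Suc n. (t ## x) !! i \<in> B i}
     = (if t \<in> B 0 then {s. \<forall>i<n. s !! i \<in> B (Suc i)} else {})"
    unfolding All_less_Suc2 by (simp add: space_stream_space)
  have ms: "{s. \<forall>i<Suc n. s !! i \<in> B i} \<in> sets (stream_space (measure_pmf P))"
  proof -
    have "{s. \<forall>i<Suc n. s !! i \<in> B i} = {s\<in>space (stream_space (measure_pmf P)). \<forall>i<Suc n. s !! i \<in> B i}"
      by (simp add: space_stream_space)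
    also have "\<dots> \<in> sets (stream_space (measure_pmf P))" by (rule iid_sets)
    finally show ?thesis .
  qed
  have "emeasure (stream_space (measure_pmf P)) {s. \<forall>i<Suc n. s !! i \<in> B i}
     = (\<integral>\<^sup>+t. indicator (B 0) t * emeasure (stream_space (measure_pmf P)) {s. \<forall>i<n. s !! i \<in> B (Suc i)} \<partial>measure_pmf P)"
    by (subst prob_space.emeasure_stream_space[OF prob_space_measure_pmf ms], simp only: mem_Collect_eq eq, rule nn_integral_cong, auto split: split_indicator)
  also have "\<dots> = emeasure (measure_pmf P) (B 0) * (\<Prod>i<n. emeasure (measure_pmf P) (B (Suc i)))"
    by (simp add: Suc nn_integral_multc)
  also have "\<dots> = (\<Prod>i<Suc n. emeasure (measure_pmf P) (B i))"
    by (rule prod.lessThan_Suc_shift[symmetric])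
  finally show ?case .
qed

definition Bset :: "(nat \<Rightarrow> 'a) \<Rightarrow> nat list \<Rightarrow> nat \<Rightarrow> (nat \<times> ('a \<times> nat \<Rightarrow> nat)) set" where
  "Bset w xs i = (case i of 0 \<Rightarrow> {p. fst p = xs ! 0} | Suc j \<Rightarrow> {p. snd p (w j, xs ! j) = xs ! Suc j})"

lemma runf_B: "(\<forall>i<n. runf w s i = xs ! i) \<longleftrightarrow> (\<forall>i<n. s !! i \<in> Bset w xs i)"
proof (induction n)
  case (Suc n)
  show ?case
  proof (cases n)
    case 0 then show ?thesis by (simp add: Bset_def)
  next
    case (Suc m)
    show ?thesis unfolding All_less_Suc Suc.IH[symmetric]
      using Suc by (auto simp: Bset_def)
  qed
qed simp

lemma prod_LR:
  fixes A :: "'a::finite pwa"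
  assumes wf: "wf_pwa A"
  shows "pmf (init A) (xs!0) * (\<Prod>i<n. pmf (map_pmf (\<lambda>g. g (w i, xs!i)) (Gp A)) (xs!Suc i))
       = pmf (init A) (xs!0) * (\<Prod>i<n. pmf (trans A (xs!i) (w i)) (xs!Suc i))
     \<and> (xs!n \<notin> states A \<longrightarrow> pmf (init A) (xs!0) * (\<Prod>i<n. pmf (trans A (xs!i) (w i)) (xs!Suc i)) = 0)"
proof (induction n)
  case 0
  have "xs!0 \<notin> states A \<Longrightarrow> pmf (init A) (xs!0) = 0"
    using wf by (auto simp: wf_pwa_def pmf_eq_0_set_pmf)
  then show ?case by simp
next
  case (Suc n)
  have fin: "finite ((UNIV::'a set) \<times> states A)" using wf by (intro finite_cartesian_product) (auto simp: wf_pwa_def)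
  show ?case
  proof (cases "xs!n \<in> states A")
    case True
    have LR: "pmf (map_pmf (\<lambda>g. g (w n, xs!n)) (Gp A)) (xs!Suc n) = pmf (trans A (xs!n) (w n)) (xs!Suc n)"
      unfolding Gp_def using True by (subst Pi_pmf_component[OF fin]) simp
    have "xs!Suc n \<notin> states A \<Longrightarrow> pmf (trans A (xs!n) (w n)) (xs!Suc n) = 0"
      using wf True by (auto simp: wf_pwa_def pmf_eq_0_set_pmf)
    note R0 = this
    have e: "pmf (init A) (xs!0) * (\<Prod>i<n. pmf (map_pmf (\<lambda>g. g (w i, xs!i)) (Gp A)) (xs!Suc i))
       = pmf (init A) (xs!0) * (\<Prod>i<n. pmf (trans A (xs!i) (w i)) (xs!Suc i))" using Suc.IH by (rule conjunct1)
    show ?thesis unfolding prod.lessThan_Suc mult.assoc[symmetric] e LR using R0 by simp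
  next
    case False
    then have z: "pmf (init A) (xs!0) * (\<Prod>i<n. pmf (trans A (xs!i) (w i)) (xs!Suc i)) = 0"
      using Suc.IH by blast
    have z2: "pmf (init A) (xs!0) * (\<Prod>i<n. pmf (map_pmf (\<lambda>g. g (w i, xs!i)) (Gp A)) (xs!Suc i)) = 0"
      by (rule trans[OF conjunct1[OF Suc.IH] z])
    show ?thesis unfolding prod.lessThan_Suc mult.assoc[symmetric] z z2 by simp
  qed
qed

lemma emeasure_B:
  fixes A :: "'a::finite pwa"
  shows "emeasure (measure_pmf (Pp A)) (Bset w xs i) =
    ennreal (case i of 0 \<Rightarrow> pmf (init A) (xs!0) | Suc j \<Rightarrow> pmf (map_pmf (\<lambda>g. g (w j, xs!j)) (Gp A)) (xs!Suc j))"
proof (cases i)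
  case 0
  have "Bset w xs i = fst -` {xs!0}" using 0 by (auto simp: Bset_def)
  then have "emeasure (measure_pmf (Pp A)) (Bset w xs i) = emeasure (measure_pmf (map_pmf fst (Pp A))) {xs!0}"
    by simp
  then show ?thesis using 0 by (simp add: Pp_def map_fst_pair_pmf emeasure_pmf_single)
next
  case (Suc j)
  have "Bset w xs i = (\<lambda>p. snd p (w j, xs!j)) -` {xs!Suc j}" using Suc by (auto simp: Bset_def)
  then have "emeasure (measure_pmf (Pp A)) (Bset w xs i) = emeasure (measure_pmf (map_pmf (\<lambda>g. g (w j, xs!j)) (map_pmf snd (Pp A)))) {xs!Suc j}"
    by (simp add: map_pmf_comp vimage_def)
  then show ?thesis using Suc by (simp add: Pp_def map_snd_pair_pmf emeasure_pmf_single)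
qed

definition Mx :: "'a::finite pwa \<Rightarrow> (nat \<Rightarrow> 'a) \<Rightarrow> nat stream measure" where
  "Mx A w = distr (stream_space (measure_pmf (Pp A))) (stream_space (count_space UNIV)) (\<lambda>s. to_stream (runf w s))"

lemma Phi_meas: "(\<lambda>s. to_stream (runf w s)) \<in> measurable (stream_space (measure_pmf P)) (stream_space (count_space UNIV))"
  by (rule measurable_stream_space2) (simp add: to_stream_def runf_meas)

lemma stake_set: "{r. stake (length xs) r = xs} = sstart UNIV xs"
proof -
  have "stake (length xs) r = xs \<longleftrightarrow> (\<forall>i<length xs. r !! i = xs ! i)" for r :: "'a stream"
    by (auto simp: list_eq_iff_nth_eq)
  moreover have "r \<in> sstart UNIV xs \<longleftrightarrow> (\<forall>i<length xs. r !! i = xs ! i)" for r :: "'a stream"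
    by (rule sstart_eq) simp
  ultimately show ?thesis by blast
qed

lemma Mx_props:
  fixes A :: "'a::finite pwa"
  assumes wf: "wf_pwa A"
  shows "sets (Mx A w) = sets (stream_space (count_space UNIV)) \<and> prob_space (Mx A w) \<and>
     (\<forall>xs. xs \<noteq> [] \<longrightarrow> emeasure (Mx A w) {r. stake (length xs) r = xs} = ennreal (prefix_prob A w xs))"
proof (intro conjI allI impI)
  show "sets (Mx A w) = sets (stream_space (count_space UNIV))" by (simp add: Mx_def)
  show "prob_space (Mx A w)" unfolding Mx_def
    by (rule prob_space.prob_space_distr[OF prob_space.prob_space_stream_space[OF prob_space_measure_pmf] Phi_meas])
  fix xs :: "nat list" assume ne: "xs \<noteq> []"
  define n where "n = length xs - 1"
  have len: "length xs = Suc n" using ne by (simp add: n_def)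
  have "emeasure (Mx A w) {r. stake (length xs) r = xs}
      = emeasure (stream_space (measure_pmf (Pp A))) {s. \<forall>i<length xs. runf w s i = xs ! i}"
  proof -
    have e: "(\<lambda>s. to_stream (runf w s)) -` sstart UNIV xs \<inter> space (stream_space (measure_pmf (Pp A)))
       = {s. \<forall>i<length xs. runf w s i = xs ! i}"
      by (auto simp: space_stream_space sstart_eq to_stream_def)
    show ?thesis unfolding Mx_def stake_set
      by (subst emeasure_distr[OF Phi_meas sets_sstart]) (simp only: e)
  qed
  also have "\<dots> = emeasure (stream_space (measure_pmf (Pp A))) {s. \<forall>i<length xs. s !! i \<in> Bset w xs i}"
    by (simp only: runf_B)
  also have "\<dots> = (\<Prod>i<Suc n. emeasure (measure_pmf (Pp A)) (Bset w xs i))"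
    by (simp only: iid_prod len)
  also have "\<dots> = ennreal (pmf (init A) (xs!0) * (\<Prod>i<n. pmf (map_pmf (\<lambda>g. g (w i, xs!i)) (Gp A)) (xs!Suc i)))"
    by (simp only: prod.lessThan_Suc_shift emeasure_B nat.case) (simp add: prod_ennreal ennreal_mult prod_nonneg)
  also have "\<dots> = ennreal (prefix_prob A w xs)"
  proof -
    have "pmf (init A) (xs!0) * (\<Prod>i<n. pmf (map_pmf (\<lambda>g. g (w i, xs!i)) (Gp A)) (xs!Suc i))
       = pmf (init A) (xs!0) * (\<Prod>i<n. pmf (trans A (xs!i) (w i)) (xs!Suc i))"
      using prod_LR[OF wf, where xs=xs and n=n and w=w] by (rule conjunct1)
    then show ?thesis unfolding prefix_prob_def hd_conv_nth[OF ne] n_def[symmetric] by (simp only:)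
  qed
  finally show "emeasure (Mx A w) {r. stake (length xs) r = xs} = ennreal (prefix_prob A w xs)" .
qed


lemma rm_eq:
  fixes A :: "'a::finite pwa"
  assumes wf: "wf_pwa A"
  shows "run_measure A w = Mx A w"
  unfolding run_measure_def
proof (rule the_equality)
  show "sets (Mx A w) = sets (stream_space (count_space UNIV)) \<and> prob_space (Mx A w) \<and>
     (\<forall>xs. xs \<noteq> [] \<longrightarrow> emeasure (Mx A w) {r. stake (length xs) r = xs} = ennreal (prefix_prob A w xs))"
    by (rule Mx_props[OF wf])
  fix M assume H: "sets M = sets (stream_space (count_space UNIV)) \<and> prob_space M \<and>
     (\<forall>xs. xs \<noteq> [] \<longrightarrow> emeasure M {r. stake (length xs) r = xs} = ennreal (prefix_prob A w xs))"
  note P = Mx_props[OF wf, of w]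
  show "M = Mx A w"
  proof (rule stream_space_eq_sstart[where S=UNIV])
    show "countable (UNIV::nat set)" by simp
    show "prob_space M" using H by blast
    show "prob_space (Mx A w)" using P by blast
    show "AE x in M. x \<in> streams UNIV" by simp
    show "AE x in Mx A w. x \<in> streams UNIV" by simp
    show "sets M = sets (stream_space (count_space UNIV))" using H by blast
    show "sets (Mx A w) = sets (stream_space (count_space UNIV))" using P by blast
    fix xs :: "nat list" assume "xs \<noteq> []" "xs \<in> lists UNIV"
    then show "emeasure M (sstart UNIV xs) = emeasure (Mx A w) (sstart UNIV xs)"
      using H P by (simp add: stake_set[symmetric])
  qed
qed

lemma rm_props:
  fixes A :: "'a::finite pwa"
  assumes wf: "wf_pwa A"
  shows "sets (run_measure A w) = sets (stream_space (count_space UNIV))" "prob_space (run_measure A w)"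
  using Mx_props[OF wf, of w] by (simp_all add: rm_eq[OF wf])

lemma ws_meas[measurable]: "(\<lambda>r. weight_seq A w r i) \<in> borel_measurable (stream_space (count_space UNIV))"
  unfolding weight_seq_def
proof (rule measurable_compose_countable'[where g="\<lambda>r. r !! i" and I=UNIV and f="\<lambda>q r. real_of_rat (wt A q (w i) (r !! Suc i))"])
  fix q :: nat
  show "(\<lambda>r. real_of_rat (wt A q (w i) (r !! Suc i))) \<in> borel_measurable (stream_space (count_space UNIV))"
    using measurable_compose[OF measurable_snth[of "Suc i" "count_space UNIV"], of "\<lambda>x. real_of_rat (wt A q (w i) x)" borel]
    by simp
qed simp_all

lemma Val_meas: "(\<lambda>r. Val V (weight_seq A w r)) \<in> borel_measurable (stream_space (count_space UNIV))"
  by (cases V) (simp_all, measurable)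

lemma ev_meas: "{r. ereal \<eta> \<le> Val V (weight_seq A w r)} \<in> sets (stream_space (count_space UNIV))"
proof -
  have "{r. ereal \<eta> \<le> Val V (weight_seq A w r)} = {r \<in> space (stream_space (count_space UNIV)). ereal \<eta> \<le> Val V (weight_seq A w r)}"
    by (simp add: space_stream_space)
  also have "\<dots> \<in> sets (stream_space (count_space UNIV))"
    using Val_meas[of V A w] by measurable
  finally show ?thesis .
qed


definition dbl :: "nat \<Rightarrow> nat" where "dbl q = 2*q"
definition od1 :: "nat \<Rightarrow> nat" where "od1 q = 2*q+1"

definition U :: "'a pwa \<Rightarrow> 'a pwa \<Rightarrow> 'a pwa" where
 "U A1 A2 = (| states = dbl ` states A1 \<union> od1 ` states A2,
   init = bind_pmf (bernoulli_pmf (1/2)) (\<lambda>b. if b then map_pmf dbl (init A1) else map_pmf od1 (init A2)),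
   trans = (\<lambda>q a. if even q then map_pmf dbl (trans A1 (q div 2) a) else map_pmf od1 (trans A2 (q div 2) a)),
   wt = (\<lambda>q a q'. if even q then wt A1 (q div 2) a (q' div 2) else wt A2 (q div 2) a (q' div 2)) |)"

lemma U_simps:
  "states (U A1 A2) = dbl ` states A1 \<union> od1 ` states A2"
  "init (U A1 A2) = bind_pmf (bernoulli_pmf (1/2)) (\<lambda>b. if b then map_pmf dbl (init A1) else map_pmf od1 (init A2))"
  "trans (U A1 A2) q a = (if even q then map_pmf dbl (trans A1 (q div 2) a) else map_pmf od1 (trans A2 (q div 2) a))"
  "wt (U A1 A2) q a q' = (if even q then wt A1 (q div 2) a (q' div 2) else wt A2 (q div 2) a (q' div 2))"
  by (simp_all add: U_def)

lemma dbl_simps[simp]: "even (dbl q)" "dbl q div 2 = q" "odd (od1 q)" "od1 q div 2 = q"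
  by (simp_all add: dbl_def od1_def)

lemma inj_dbl: "inj dbl" and inj_od1: "inj od1"
  by (auto simp: inj_def dbl_def od1_def)

lemma wf_U: assumes w1: "wf_pwa A1" and w2: "wf_pwa A2" shows "wf_pwa (U A1 A2)"
proof -
  have "finite (states (U A1 A2))" using w1 w2 by (simp add: U_simps wf_pwa_def)
  moreover have "set_pmf (init (U A1 A2)) \<subseteq> states (U A1 A2)"
    using w1 w2 by (auto simp: U_simps wf_pwa_def set_bind_pmf split: if_splits) blast+
  moreover have "\<forall>q\<in>states (U A1 A2). \<forall>\<sigma>. set_pmf (trans (U A1 A2) q \<sigma>) \<subseteq> states (U A1 A2)"
  proof (intro ballI allI)
    fix q \<sigma> assume "q \<in> states (U A1 A2)"
    then consider x where "x \<in> states A1" "q = dbl x" | x where "x \<in> states A2" "q = od1 x"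
      by (auto simp: U_simps)
    then show "set_pmf (trans (U A1 A2) q \<sigma>) \<subseteq> states (U A1 A2)"
    proof cases
      case 1
      then have "set_pmf (trans A1 x \<sigma>) \<subseteq> states A1" using w1 by (auto simp: wf_pwa_def)
      then show ?thesis using 1 by (auto simp: U_simps)
    next
      case 2
      then have "set_pmf (trans A2 x \<sigma>) \<subseteq> states A2" using w2 by (auto simp: wf_pwa_def)
      then show ?thesis using 2 by (auto simp: U_simps)
    qed
  qed
  ultimately show ?thesis by (simp add: wf_pwa_def)
qed

lemma pmf_map_dbl: "pmf (map_pmf dbl p) x = (if even x then pmf p (x div 2) else 0)"
proof (cases "even x")
  case True
  then have "x = dbl (x div 2)" by (simp add: dbl_def)
  then show ?thesis using True pmf_map_inj'[OF inj_dbl, of p "x div 2"] by simp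
next
  case False
  then have "x \<notin> set_pmf (map_pmf dbl p)" by auto
  then show ?thesis using False by (simp add: pmf_eq_0_set_pmf)
qed

lemma pmf_map_od1: "pmf (map_pmf od1 p) x = (if odd x then pmf p (x div 2) else 0)"
proof (cases "odd x")
  case True
  then have "x = od1 (x div 2)" by (simp add: od1_def)
  then show ?thesis using True pmf_map_inj'[OF inj_od1, of p "x div 2"] by simp
next
  case False
  then have "x \<notin> set_pmf (map_pmf od1 p)" by auto
  then show ?thesis using False by (simp add: pmf_eq_0_set_pmf)
qed

lemma pmf_init_U: "pmf (init (U A1 A2)) x =
   (if even x then pmf (init A1) (x div 2) else 0) / 2 + (if odd x then pmf (init A2) (x div 2) else 0) / 2"
  unfolding U_simps pmf_bind
  by (subst integral_measure_pmf_real[where A=UNIV]) (auto simp: UNIV_bool pmf_map_dbl pmf_map_od1)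

lemma pmf_trans_U: "pmf (trans (U A1 A2) q a) x =
   (if even q then (if even x then pmf (trans A1 (q div 2) a) (x div 2) else 0)
    else (if odd x then pmf (trans A2 (q div 2) a) (x div 2) else 0))"
  unfolding U_simps by (simp add: pmf_map_dbl pmf_map_od1)

lemma parity_chain:
  assumes "\<forall>i<n. even (x i) = even (x (Suc i))"
  shows "j \<le> n \<Longrightarrow> even (x j) = even (x 0)"
  using assms by (induction j) auto

lemma prefix_U:
  assumes ne: "xs \<noteq> []"
  shows "prefix_prob (U A1 A2) w xs =
    (if \<forall>x\<in>set xs. even x then prefix_prob A1 w (map (\<lambda>x. x div 2) xs) else 0) / 2 +
    (if \<forall>x\<in>set xs. odd x then prefix_prob A2 w (map (\<lambda>x. x div 2) xs) else 0) / 2"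
proof -
  obtain n where len: "length xs = Suc n" using ne by (cases xs) auto
  define h where "h = map (\<lambda>x. x div 2) xs"
  have pre: "prefix_prob A w xs = pmf (init A) (xs!0) * (\<Prod>i<n. pmf (trans A (xs!i) (w i)) (xs!Suc i))" for A :: "'a pwa"
    unfolding prefix_prob_def hd_conv_nth[OF ne] len by simp
  have preh: "prefix_prob A w h = pmf (init A) (xs!0 div 2) * (\<Prod>i<n. pmf (trans A (xs!i div 2) (w i)) (xs!Suc i div 2))" for A :: "'a pwa"
  proof -
    have hne: "h \<noteq> []" using ne by (simp add: h_def)
    have "(\<Prod>i<n. pmf (trans A (h!i) (w i)) (h!Suc i)) = (\<Prod>i<n. pmf (trans A (xs!i div 2) (w i)) (xs!Suc i div 2))"
      by (rule prod.cong) (auto simp: h_def len)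
    then show ?thesis unfolding prefix_prob_def hd_conv_nth[OF hne]
      by (simp add: h_def len nth_map[of 0])
  qed
  have setx: "(\<forall>x\<in>set xs. P x) \<longleftrightarrow> (\<forall>j\<le>n. P (xs!j))" for P
    by (auto simp: all_set_conv_all_nth len less_Suc_eq_le)
  show ?thesis
  proof (cases "\<exists>i<n. even (xs!i) \<noteq> even (xs!Suc i)")
    case True
    then obtain i where i: "i < n" "even (xs!i) \<noteq> even (xs!Suc i)" by blast
    have "pmf (trans (U A1 A2) (xs!i) (w i)) (xs!Suc i) = 0"
      using i(2) by (auto simp: pmf_trans_U)
    then have "(\<Prod>i<n. pmf (trans (U A1 A2) (xs!i) (w i)) (xs!Suc i)) = 0"
      using i(1) by (intro prod_zero) auto
    then have L: "prefix_prob (U A1 A2) w xs = 0" by (simp add: pre)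
    have "\<not> (\<forall>x\<in>set xs. even x)" "\<not> (\<forall>x\<in>set xs. odd x)"
      unfolding setx using i by (metis Suc_leI less_imp_le_nat)+
    note nn = this
    show ?thesis unfolding L if_not_P[OF nn(1)] if_not_P[OF nn(2)] by simp
  next
    case False
    then have ch: "\<And>j. j \<le> n \<Longrightarrow> even (xs!j) = even (xs!0)"
      by (intro parity_chain[where x="\<lambda>i. xs!i"]) auto
    show ?thesis
    proof (cases "even (xs!0)")
      case True
      have ae: "\<forall>x\<in>set xs. even x" unfolding setx using ch True by blast
      have no: "\<not> (\<forall>x\<in>set xs. odd x)" unfolding setx using True by blast
      have fac: "(\<Prod>i<n. pmf (trans (U A1 A2) (xs!i) (w i)) (xs!Suc i)) = (\<Prod>i<n. pmf (trans A1 (xs!i div 2) (w i)) (xs!Suc i div 2))"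
      proof (rule prod.cong)
        fix i assume "i \<in> {..<n}"
        then have "even (xs!i)" "even (xs!Suc i)" using ch True by auto
        then show "pmf (trans (U A1 A2) (xs!i) (w i)) (xs!Suc i) = pmf (trans A1 (xs!i div 2) (w i)) (xs!Suc i div 2)"
          by (simp add: pmf_trans_U)
      qed simp
      show ?thesis unfolding pre fac preh[unfolded h_def] using ae no True
        by (simp add: pmf_init_U)
    next
      case False
      have ae: "\<forall>x\<in>set xs. odd x" unfolding setx using ch False by blast
      have no: "\<not> (\<forall>x\<in>set xs. even x)" unfolding setx using False by blast
      have fac: "(\<Prod>i<n. pmf (trans (U A1 A2) (xs!i) (w i)) (xs!Suc i)) = (\<Prod>i<n. pmf (trans A2 (xs!i div 2) (w i)) (xs!Suc i div 2))"
      proof (rule prod.cong)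
        fix i assume "i \<in> {..<n}"
        then have "odd (xs!i)" "odd (xs!Suc i)" using ch False by auto
        then show "pmf (trans (U A1 A2) (xs!i) (w i)) (xs!Suc i) = pmf (trans A2 (xs!i div 2) (w i)) (xs!Suc i div 2)"
          by (simp add: pmf_trans_U)
      qed simp
      show ?thesis unfolding pre fac preh[unfolded h_def] using ae no False
        by (simp add: pmf_init_U)
    qed
  qed
qed

lemma rm_unique:
  fixes A :: "'a::finite pwa"
  assumes wf: "wf_pwa A" and sM: "sets M = sets (stream_space (count_space UNIV))" and pM: "prob_space M"
    and cyl: "\<And>xs. xs \<noteq> [] \<Longrightarrow> emeasure M (sstart UNIV xs) = ennreal (prefix_prob A w xs)"
  shows "run_measure A w = M"
proof -
  note P = Mx_props[OF wf, of w]
  have "Mx A w = M"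
  proof (rule stream_space_eq_sstart[where S=UNIV])
    show "countable (UNIV::nat set)" by simp
    show "prob_space M" by (rule pM)
    show "prob_space (Mx A w)" using P by blast
    show "AE x in M. x \<in> streams UNIV" by simp
    show "AE x in Mx A w. x \<in> streams UNIV" by simp
    show "sets M = sets (stream_space (count_space UNIV))" by (rule sM)
    show "sets (Mx A w) = sets (stream_space (count_space UNIV))" using P by blast
    fix xs :: "nat list" assume "xs \<noteq> []" "xs \<in> lists UNIV"
    then show "emeasure (Mx A w) (sstart UNIV xs) = emeasure M (sstart UNIV xs)"
      using P cyl by (simp add: stake_set[symmetric])
  qed
  then show ?thesis using rm_eq[OF wf] by simp
qed

lemma rm_cyl:
  fixes A :: "'a::finite pwa"
  assumes wf: "wf_pwa A" and ne: "ys \<noteq> []"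
  shows "emeasure (run_measure A w) (sstart UNIV ys) = ennreal (prefix_prob A w ys)"
  using Mx_props[OF wf, of w] ne by (simp add: rm_eq[OF wf] stake_set[symmetric])

lemma smap_meas:
  fixes A :: "'a::finite pwa"
  assumes wf: "wf_pwa A"
  shows "smap f \<in> measurable (run_measure A w) (stream_space (count_space UNIV))"
  unfolding measurable_cong_sets[OF rm_props(1)[OF wf] refl]
  by (rule measurable_smap) simp

lemma space_rm:
  fixes A :: "'a::finite pwa"
  assumes wf: "wf_pwa A"
  shows "space (run_measure A w) = UNIV"
  using sets_eq_imp_space_eq[OF rm_props(1)[OF wf]] by (simp add: space_stream_space)

definition Kk :: "'a::finite pwa \<Rightarrow> 'a pwa \<Rightarrow> (nat \<Rightarrow> 'a) \<Rightarrow> bool \<Rightarrow> nat stream measure" where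
  "Kk A1 A2 w b = (if b then distr (run_measure A1 w) (stream_space (count_space UNIV)) (smap dbl)
     else distr (run_measure A2 w) (stream_space (count_space UNIV)) (smap od1))"

definition Mix :: "'a::finite pwa \<Rightarrow> 'a pwa \<Rightarrow> (nat \<Rightarrow> 'a) \<Rightarrow> nat stream measure" where
  "Mix A1 A2 w = measure_pmf (bernoulli_pmf (1/2)) \<bind> Kk A1 A2 w"

lemma sst: "(r \<in> sstart UNIV ys) = (\<forall>i<length ys. r !! i = ys ! i)"
  by (rule sstart_eq) simp

lemma pre_dbl: "smap dbl -` sstart UNIV xs = (if \<forall>x\<in>set xs. even x then sstart UNIV (map (\<lambda>x. x div 2) xs) else {})"
proof (cases "\<forall>x\<in>set xs. even x")
  case True
  then have "\<And>i. i < length xs \<Longrightarrow> even (xs!i)" by (simp add: all_set_conv_all_nth)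
  then have "\<And>i a. i < length xs \<Longrightarrow> (dbl a = xs ! i) = (a = xs!i div 2)" by (auto simp: dbl_def)
  then show ?thesis using True by (auto simp: sst)
next
  case False
  then obtain i where i: "i < length xs" "odd (xs!i)" by (auto simp: all_set_conv_all_nth)
  have "\<And>a. dbl a \<noteq> xs!i" using i(2) unfolding dbl_def by presburger
  then show ?thesis using False i by (auto simp: sst) metis
qed

lemma pre_od1: "smap od1 -` sstart UNIV xs = (if \<forall>x\<in>set xs. odd x then sstart UNIV (map (\<lambda>x. x div 2) xs) else {})"
proof (cases "\<forall>x\<in>set xs. odd x")
  case True
  then have "\<And>i. i < length xs \<Longrightarrow> odd (xs!i)" by (simp add: all_set_conv_all_nth)
  then have "\<And>i a. i < length xs \<Longrightarrow> (od1 a = xs ! i) = (a = xs!i div 2)" by (auto simp: od1_def elim!: oddE)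
  then show ?thesis using True by (auto simp: sst)
next
  case False
  then obtain i where i: "i < length xs" "even (xs!i)" by (auto simp: all_set_conv_all_nth)
  have "\<And>a. od1 a \<noteq> xs!i" using i(2) unfolding od1_def by presburger
  then show ?thesis using False i by (auto simp: sst) metis
qed

lemma half_comb:
  assumes "0 \<le> a" "0 \<le> b"
  shows "ennreal (1/2) * ennreal a + ennreal (1/2) * ennreal b = ennreal (a/2 + b/2)"
proof -
  have 1: "ennreal (1/2) * ennreal a = ennreal (1/2 * a)" by (rule ennreal_mult[symmetric]) (simp_all add: assms)
  have 2: "ennreal (1/2) * ennreal b = ennreal (1/2 * b)" by (rule ennreal_mult[symmetric]) (simp_all add: assms)
  have 3: "ennreal (1/2 * a) + ennreal (1/2 * b) = ennreal (1/2 * a + 1/2 * b)" by (rule ennreal_plus[symmetric]) (simp_all add: assms)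
  have 4: "1/2 * a + 1/2 * b = a/2 + b/2" by simp
  show ?thesis unfolding 1 2 3 4 ..
qed

lemma prefix_nonneg: "0 \<le> prefix_prob A w xs"
  unfolding prefix_prob_def by (intro mult_nonneg_nonneg prod_nonneg) auto

context
  fixes A1 A2 :: "'a::finite pwa" and w :: "nat \<Rightarrow> 'a"
  assumes w1: "wf_pwa A1" and w2: "wf_pwa A2"
begin

lemma Kk_prob: "Kk A1 A2 w b \<in> space (prob_algebra (stream_space (count_space UNIV)))"
  unfolding space_prob_algebra Kk_def
  using prob_space.prob_space_distr[OF rm_props(2)[OF w1] smap_meas[OF w1], of w dbl]
        prob_space.prob_space_distr[OF rm_props(2)[OF w2] smap_meas[OF w2], of w od1]
  by auto

lemma Kk_meas: "Kk A1 A2 w \<in> count_space UNIV \<rightarrow>\<^sub>M prob_algebra (stream_space (count_space UNIV))"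
  using Kk_prob by simp

lemma bern_space: "measure_pmf (bernoulli_pmf (1/2)) \<in> space (prob_algebra (count_space UNIV))"
  unfolding space_prob_algebra by (simp add: prob_space_measure_pmf)

lemma sets_Mix: "sets (Mix A1 A2 w) = sets (stream_space (count_space UNIV))"
  unfolding Mix_def by (rule sets_bind'[OF bern_space Kk_meas])

lemma prob_Mix: "prob_space (Mix A1 A2 w)"
  unfolding Mix_def by (rule prob_space_bind'[OF bern_space Kk_meas])

lemma mix_em:
  assumes X: "X \<in> sets (stream_space (count_space UNIV))"
  shows "emeasure (Mix A1 A2 w) X = ennreal (1/2) * emeasure (Kk A1 A2 w True) X + ennreal (1/2) * emeasure (Kk A1 A2 w False) X"
  unfolding Mix_def
  by (subst emeasure_bind_prob_algebra[OF bern_space Kk_meas X], subst nn_integral_measure_pmf_finite)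
     (auto simp: UNIV_bool mult.commute)

lemma Kk_True: "X \<in> sets (stream_space (count_space UNIV)) \<Longrightarrow> emeasure (Kk A1 A2 w True) X = emeasure (run_measure A1 w) (smap dbl -` X)"
  unfolding Kk_def by (simp add: emeasure_distr[OF smap_meas[OF w1]] space_rm[OF w1])

lemma Kk_False: "X \<in> sets (stream_space (count_space UNIV)) \<Longrightarrow> emeasure (Kk A1 A2 w False) X = emeasure (run_measure A2 w) (smap od1 -` X)"
  unfolding Kk_def by (simp add: emeasure_distr[OF smap_meas[OF w2]] space_rm[OF w2])

lemma Mix_rm: "run_measure (U A1 A2) w = Mix A1 A2 w"
proof (rule rm_unique[OF wf_U[OF w1 w2] sets_Mix prob_Mix])
  fix xs :: "nat list" assume ne: "xs \<noteq> []"
  have e1: "emeasure (Kk A1 A2 w True) (sstart UNIV xs) = ennreal (if \<forall>x\<in>set xs. even x then prefix_prob A1 w (map (\<lambda>x. x div 2) xs) else 0)"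
    using ne by (simp add: Kk_True pre_dbl rm_cyl[OF w1])
  have e2: "emeasure (Kk A1 A2 w False) (sstart UNIV xs) = ennreal (if \<forall>x\<in>set xs. odd x then prefix_prob A2 w (map (\<lambda>x. x div 2) xs) else 0)"
    using ne by (simp add: Kk_False pre_od1 rm_cyl[OF w2])
  have nn1: "0 \<le> (if \<forall>x\<in>set xs. even x then prefix_prob A1 w (map (\<lambda>x. x div 2) xs) else 0)"
    by (simp add: prefix_nonneg)
  have nn2: "0 \<le> (if \<forall>x\<in>set xs. odd x then prefix_prob A2 w (map (\<lambda>x. x div 2) xs) else 0)"
    by (simp add: prefix_nonneg)
  show "emeasure (Mix A1 A2 w) (sstart UNIV xs) = ennreal (prefix_prob (U A1 A2) w xs)"
    unfolding mix_em[OF sets_sstart] e1 e2 prefix_U[OF ne]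
    using nn1 nn2 by (rule half_comb)
qed

end


lemma ws_dbl: "weight_seq (U A1 A2) w (smap dbl r) = weight_seq A1 w r"
  by (rule ext) (simp add: weight_seq_def U_simps)

lemma ws_od1: "weight_seq (U A1 A2) w (smap od1 r) = weight_seq A2 w r"
  by (rule ext) (simp add: weight_seq_def U_simps)

definition pr :: "'a::finite pwa \<Rightarrow> valfun \<Rightarrow> (nat \<Rightarrow> 'a) \<Rightarrow> real \<Rightarrow> real" where
  "pr A V w \<eta> = measure (run_measure A w) {r. ereal \<eta> \<le> Val V (weight_seq A w r)}"

lemma pr_bounds:
  fixes A :: "'a::finite pwa"
  assumes wf: "wf_pwa A"
  shows "0 \<le> pr A V w \<eta>" "pr A V w \<eta> \<le> 1"
proof -
  interpret prob_space "run_measure A w" by (rule rm_props(2)[OF wf])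
  show "0 \<le> pr A V w \<eta>" by (simp add: pr_def)
  show "pr A V w \<eta> \<le> 1" by (simp add: pr_def prob_le_1)
qed

lemma pr_mono:
  fixes A :: "'a::finite pwa"
  assumes wf: "wf_pwa A" and le: "\<eta>' \<le> \<eta>"
  shows "pr A V w \<eta> \<le> pr A V w \<eta>'"
proof -
  interpret prob_space "run_measure A w" by (rule rm_props(2)[OF wf])
  have sub: "{r. ereal \<eta> \<le> Val V (weight_seq A w r)} \<subseteq> {r. ereal \<eta>' \<le> Val V (weight_seq A w r)}"
  proof -
    have "ereal \<eta>' \<le> ereal \<eta>" using le by simp
    then show ?thesis using order_trans by blast
  qed
  have "{r. ereal \<eta>' \<le> Val V (weight_seq A w r)} \<in> sets (run_measure A w)"
    using ev_meas rm_props(1)[OF wf] by simp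
  then show ?thesis unfolding pr_def by (rule finite_measure_mono[OF sub])
qed

lemma pr_U:
  fixes A1 A2 :: "'a::finite pwa"
  assumes w1: "wf_pwa A1" and w2: "wf_pwa A2"
  shows "pr (U A1 A2) V w \<eta> = pr A1 V w \<eta> / 2 + pr A2 V w \<eta> / 2"
proof -
  define E where "E = {r. ereal \<eta> \<le> Val V (weight_seq (U A1 A2) w r)}"
  define E1 where "E1 = {r. ereal \<eta> \<le> Val V (weight_seq A1 w r)}"
  define E2 where "E2 = {r. ereal \<eta> \<le> Val V (weight_seq A2 w r)}"
  have Es: "E \<in> sets (stream_space (count_space UNIV))" unfolding E_def by (rule ev_meas)
  have p1: "smap dbl -` E = E1" by (auto simp: E_def E1_def ws_dbl)
  have p2: "smap od1 -` E = E2" by (auto simp: E_def E2_def ws_od1)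
  have wU: "wf_pwa (U A1 A2)" by (rule wf_U[OF w1 w2])
  interpret P1: prob_space "run_measure A1 w" by (rule rm_props(2)[OF w1])
  interpret P2: prob_space "run_measure A2 w" by (rule rm_props(2)[OF w2])
  interpret PU: prob_space "run_measure (U A1 A2) w" by (rule rm_props(2)[OF wU])
  have "emeasure (run_measure (U A1 A2) w) E = ennreal (1/2) * emeasure (run_measure A1 w) E1 + ennreal (1/2) * emeasure (run_measure A2 w) E2"
    unfolding Mix_rm[OF w1 w2] mix_em[OF w1 w2 Es] Kk_True[OF w1 w2 Es] Kk_False[OF w1 w2 Es] p1 p2 ..
  also have "\<dots> = ennreal (1/2) * ennreal (pr A1 V w \<eta>) + ennreal (1/2) * ennreal (pr A2 V w \<eta>)"
    unfolding pr_def E1_def E2_def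
    by (simp only: P1.emeasure_eq_measure P2.emeasure_eq_measure)
  also have "\<dots> = ennreal (pr A1 V w \<eta> / 2 + pr A2 V w \<eta> / 2)"
    by (rule half_comb) (simp_all add: pr_bounds w1 w2)
  finally have "ennreal (pr (U A1 A2) V w \<eta>) = ennreal (pr A1 V w \<eta> / 2 + pr A2 V w \<eta> / 2)"
    unfolding pr_def E_def by (simp only: PU.emeasure_eq_measure)
  then show ?thesis
    by (subst (asm) ennreal_inj) (simp_all add: pr_bounds w1 w2 wU)
qed

lemma Sup_union_pos: "Sup {ereal x |x. P x \<or> Q x} = max (Sup {ereal x|x. P x}) (Sup {ereal x|x. Q x})"
proof -
  have "{ereal x |x. P x \<or> Q x} = {ereal x|x. P x} \<union> {ereal x|x. Q x}" by blast
  then show ?thesis by (simp add: Sup_union_distrib sup_max)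
qed

lemma Sup_inter_down:
  assumes P: "\<And>x y. P x \<Longrightarrow> y \<le> x \<Longrightarrow> P y" and Q: "\<And>x y. Q x \<Longrightarrow> y \<le> x \<Longrightarrow> Q y"
  shows "Sup {ereal x |x. P x \<and> Q x} = min (Sup {ereal x|x. P x}) (Sup {ereal x|x. Q x})"
proof (rule antisym)
  have 1: "Sup {ereal x |x. P x \<and> Q x} \<le> Sup {ereal x|x. P x}" by (rule Sup_subset_mono) blast
  have 2: "Sup {ereal x |x. P x \<and> Q x} \<le> Sup {ereal x|x. Q x}" by (rule Sup_subset_mono) blast
  show "Sup {ereal x |x. P x \<and> Q x} \<le> min (Sup {ereal x|x. P x}) (Sup {ereal x|x. Q x})"
    using 1 2 by (rule min.boundedI)
  show "min (Sup {ereal x|x. P x}) (Sup {ereal x|x. Q x}) \<le> Sup {ereal x |x. P x \<and> Q x}"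
  proof (rule dense_le)
    fix y assume y: "y < min (Sup {ereal x|x. P x}) (Sup {ereal x|x. Q x})"
    show "y \<le> Sup {ereal x |x. P x \<and> Q x}"
    proof (cases y)
      case (real r)
      have "ereal r < Sup {ereal x|x. P x}" using y real by simp
      then obtain z where "z \<in> {ereal x|x. P x}" "ereal r < z" unfolding less_Sup_iff by blast
      then obtain x1 where "P x1" "r < x1" by auto
      then have Pr: "P r" using P[of x1 r] by simp
      have "ereal r < Sup {ereal x|x. Q x}" using y real by simp
      then obtain z2 where "z2 \<in> {ereal x|x. Q x}" "ereal r < z2" unfolding less_Sup_iff by blast
      then obtain x2 where "Q x2" "r < x2" by auto
      then have Qr: "Q r" using Q[of x2 r] by simp
      have "ereal r \<in> {ereal x |x. P x \<and> Q x}" using Pr Qr by blast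
      then show ?thesis unfolding real by (rule Sup_upper)
    next
      case PInf then show ?thesis using y by simp
    next
      case MInf then show ?thesis by simp
    qed
  qed
qed

lemma lang_pr: "lang Pos V A w = Sup {ereal \<eta> |\<eta>. 0 < pr A V w \<eta>}"
  "lang As V A w = Sup {ereal \<eta> |\<eta>. pr A V w \<eta> = 1}"
  by (simp_all add: pr_def)

lemma pos_half: "0 \<le> (a::real) \<Longrightarrow> 0 \<le> b \<Longrightarrow> (0 < a/2 + b/2) = (0 < a \<or> 0 < b)"
  by (cases "0 < a") auto

lemma lang_U_pos:
  fixes A1 A2 :: "'a::finite pwa"
  assumes w1: "wf_pwa A1" and w2: "wf_pwa A2"
  shows "lang Pos V (U A1 A2) w = max (lang Pos V A1 w) (lang Pos V A2 w)"
proof -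
  have "0 < pr (U A1 A2) V w \<eta> \<longleftrightarrow> 0 < pr A1 V w \<eta> \<or> 0 < pr A2 V w \<eta>" for \<eta>
    unfolding pr_U[OF w1 w2] using pr_bounds(1)[OF w1, of V w \<eta>] pr_bounds(1)[OF w2, of V w \<eta>]
    by (rule pos_half)
  then show ?thesis unfolding lang_pr by (simp add: Sup_union_pos)
qed

lemma lang_U_as:
  fixes A1 A2 :: "'a::finite pwa"
  assumes w1: "wf_pwa A1" and w2: "wf_pwa A2"
  shows "lang As V (U A1 A2) w = min (lang As V A1 w) (lang As V A2 w)"
proof -
  have "pr (U A1 A2) V w \<eta> = 1 \<longleftrightarrow> pr A1 V w \<eta> = 1 \<and> pr A2 V w \<eta> = 1" for \<eta>
    unfolding pr_U[OF w1 w2] using pr_bounds(2)[OF w1, of V w \<eta>] pr_bounds(2)[OF w2, of V w \<eta>]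
    by (intro iffI; (elim conjE)?; (intro conjI)?; linarith)
  then have "lang As V (U A1 A2) w = Sup {ereal \<eta> |\<eta>. pr A1 V w \<eta> = 1 \<and> pr A2 V w \<eta> = 1}"
    unfolding lang_pr by simp
  also have "\<dots> = min (lang As V A1 w) (lang As V A2 w)"
    unfolding lang_pr
  proof (rule Sup_inter_down)
    fix x y assume "pr A1 V w x = 1" "y \<le> x"
    then show "pr A1 V w y = 1" using pr_mono[OF w1, of y x V w] pr_bounds(2)[OF w1, of V w y] by simp
  next
    fix x y assume "pr A2 V w x = 1" "y \<le> x"
    then show "pr A2 V w y = 1" using pr_mono[OF w2, of y x V w] pr_bounds(2)[OF w2, of V w y] by simp
  qed
  finally show ?thesis .
qed

lemma cmax: "closed_max Pos V TYPE('a::finite)"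
  unfolding closed_max_def
proof (intro allI impI)
  fix A1 A2 :: "'a pwa" assume w1: "wf_pwa A1" and w2: "wf_pwa A2"
  show "\<exists>A :: 'a pwa. wf_pwa A \<and> (\<forall>w. lang Pos V A w = max (lang Pos V A1 w) (lang Pos V A2 w))"
    using wf_U[OF w1 w2] lang_U_pos[OF w1 w2] by blast
qed

lemma cmin: "closed_min As V TYPE('a::finite)"
  unfolding closed_min_def
proof (intro allI impI)
  fix A1 A2 :: "'a pwa" assume w1: "wf_pwa A1" and w2: "wf_pwa A2"
  show "\<exists>A :: 'a pwa. wf_pwa A \<and> (\<forall>w. lang As V A w = min (lang As V A1 w) (lang As V A2 w))"
    using wf_U[OF w1 w2] lang_U_as[OF w1 w2] by blast
qed

theorem lemma16:
  shows "closed_max Pos LimSup TYPE('a::finite) \<and> closed_max Pos LimInf TYPE('a) \<and>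
         closed_max Pos LimAvg TYPE('a) \<and>
         closed_min As LimSup TYPE('a) \<and> closed_min As LimInf TYPE('a) \<and>
         closed_min As LimAvg TYPE('a)"
  by (simp add: cmax cmin)

end
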